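(* Let $(V,\mathcal H,\iota,W)$ be an abelian generalized functional theory with set of weights $\Omega$. Then the set of representable densities $\iota^*(\mathcal P)=\iota^*(\mathcal E)=\mathrm{conv}(\Omega)$ is a convex polytope of dimension $\dim V-\dim\iota^{-1}(\mathrm{span}\{\mathbb 1\})$.
   Context: A generalized functional theory is a tuple $(V,\mathcal H,\iota,W)$ with $V$ a finite-dimensional real vector space, $\mathcal H$ a finite-dimensional complex Hilbert space, $\iota:V\to i\mathfrak u(\mathcal H)$ linear into the Hermitian operators, $W$ Hermitian. States are regarded as elements of $(i\mathfrak u(\mathcal H))^*$ via the trace pairing; $\iota^*$ is the dual map; $\mathcal P$ = pure states, $\mathcal E$ = density operators; $\mathbb 1$ is the identity on $\mathcal H$. The theory is abelian if $[\iota(v),\iota(v')]=0$ for all $v,v'$. A weight is $\alpha\in V^*$ such that some nonzero $\psi$ satisfies $\iota(v)\psi=\langle\alpha,v\rangle\psi$ for all $v$; $\Omega$ denotes the (finite) set of weights. *)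

theory Defs
  imports "HOL-Analysis.Analysis"
begin

text \<open>The Hilbert space H is modelled as complex^'m (finite nonempty index type 'm),
operators as complex^'m^'m, V as real^'n.  Elements of V^* are represented by
vectors of real^'n via the pairing  <alpha, v> = alpha \<bullet> v.\<close>

definition adjoint_mat :: "complex^'m^'m \<Rightarrow> complex^'m^'m" where
  "adjoint_mat A = (\<chi> i j. cnj (A $ j $ i))"

definition hermitian :: "complex^'m^'m \<Rightarrow> bool" where
  "hermitian A \<longleftrightarrow> adjoint_mat A = A"

definition cinner :: "complex^'m \<Rightarrow> complex^'m \<Rightarrow> complex" where
  "cinner x y = (\<Sum>i\<in>UNIV. cnj (x $ i) * y $ i)"

definition density_ops :: "(complex^'m^'m) set" where
  "density_ops = {\<rho>. hermitian \<rho> \<and> (\<forall>x. 0 \<le> Re (cinner x (\<rho> *v x))) \<and> trace \<rho> = 1}"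

definition pure_states :: "(complex^'m^'m) set" where
  "pure_states = {\<rho>. \<exists>\<psi>::complex^'m. cinner \<psi> \<psi> = 1 \<and>
                     \<rho> = (\<chi> i j. \<psi> $ i * cnj (\<psi> $ j))}"

text \<open>The dual map iota^*: a state rho goes to the functional v \<mapsto> tr(rho iota(v)),
represented by its coordinate vector.\<close>
definition iota_star :: "(real^'n \<Rightarrow> complex^'m^'m) \<Rightarrow> complex^'m^'m \<Rightarrow> real^'n" where
  "iota_star \<iota> \<rho> = (\<chi> k. Re (trace (\<rho> ** \<iota> (axis k 1))))"

definition abelian_theory :: "(real^'n \<Rightarrow> complex^'m^'m) \<Rightarrow> bool" where
  "abelian_theory \<iota> \<longleftrightarrow> (\<forall>v v'. \<iota> v ** \<iota> v' = \<iota> v' ** \<iota> v)"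

definition weights :: "(real^'n \<Rightarrow> complex^'m^'m) \<Rightarrow> (real^'n) set" where
  "weights \<iota> = {\<alpha>. \<exists>\<psi>::complex^'m. \<psi> \<noteq> 0 \<and>
                    (\<forall>v. \<iota> v *v \<psi> = complex_of_real (\<alpha> \<bullet> v) *s \<psi>)}"

end

theory Submission
  imports Defs
begin


lemma cinner_sum_right: "cinner x (sum f S) = (\<Sum>s\<in>S. cinner x (f s))"
  by (simp add: cinner_def sum_component sum_distrib_left sum.swap[of _ S])

lemma cinner_scale_right: "cinner x (c *s y) = c * cinner x y"
  by (simp add: cinner_def sum_distrib_left mult.assoc mult.left_commute)

lemma vec_scaleR_comp: "(r *\<^sub>R (y::complex^'m)) $ i = of_real r * y $ i"
  by (simp add: complex_eq_iff)

lemma cinner_scaleR_right: "cinner x (r *\<^sub>R y) = of_real r * cinner x y"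
  by (simp only: cinner_def vec_scaleR_comp sum_distrib_left mult.left_commute)

lemma cinner_scaleR_left: "cinner (r *\<^sub>R x) y = of_real r * cinner x y"
  by (simp only: cinner_def vec_scaleR_comp sum_distrib_left mult.assoc complex_cnj_mult complex_cnj_complex_of_real)

lemma cinner_add_right: "cinner x (y + z) = cinner x y + cinner x z"
  by (simp add: cinner_def distrib_left sum.distrib)

lemma cinner_zero_right[simp]: "cinner x 0 = 0"
  by (simp add: cinner_def)

lemma cinner_cnj: "cnj (cinner x y) = cinner y x"
  by (simp add: cinner_def mult.commute)

lemma inner_cinner: "(x::complex^'m) \<bullet> y = Re (cinner x y)"
  by (simp add: cinner_def inner_vec_def inner_complex_def Re_sum)

lemma cinner_self: "cinner x x = of_real (x \<bullet> x)"
proof -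
  have "Im (cinner x x) = 0"
    by (simp add: cinner_def Im_sum)
  then show ?thesis by (simp add: inner_cinner complex_eq_iff)
qed

lemma of_real_smult: "(of_real r :: complex) *s x = r *\<^sub>R x"
  by (subst vec_eq_iff) (simp only: vec_scaleR_comp vector_smult_component simp_thms)

lemma csmult_decomp: "(c::complex) *s x = Re c *\<^sub>R x + Im c *\<^sub>R (\<i> *s x)"
  by (simp add: vec_eq_iff vec_scaleR_comp complex_eq_iff)

lemma mv_scale: "(M::complex^'m^'m) *v (c *s x) = c *s (M *v x)"
  by (simp add: vec_eq_iff matrix_vector_mult_def sum_distrib_left mult.left_commute)

lemma mv_scaleR: "(M::complex^'m^'m) *v (r *\<^sub>R x) = r *\<^sub>R (M *v x)"
  by (metis mv_scale of_real_smult)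

lemma mv_linear: "linear (\<lambda>x. (M::complex^'m^'m) *v x)"
  by (rule linearI) (simp_all add: matrix_vector_right_distrib mv_scaleR)

lemma herm_cinner:
  assumes "hermitian M"
  shows "cinner (M *v x) y = cinner x (M *v y)"
proof -
  have M: "cnj (M $ i $ j) = M $ j $ i" for i j
  proof -
    have "adjoint_mat M $ j $ i = M $ j $ i" using assms by (simp add: hermitian_def)
    then show ?thesis by (simp add: adjoint_mat_def)
  qed
  have "cinner (M *v x) y = (\<Sum>i\<in>UNIV. (\<Sum>j\<in>UNIV. M $ j $ i * cnj (x $ j)) * y $ i)"
    by (simp add: cinner_def matrix_vector_mult_def M)
  also have "\<dots> = (\<Sum>i\<in>UNIV. \<Sum>j\<in>UNIV. M $ j $ i * cnj (x $ j) * y $ i)"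
    by (simp add: sum_distrib_right)
  also have "\<dots> = (\<Sum>j\<in>UNIV. \<Sum>i\<in>UNIV. M $ j $ i * cnj (x $ j) * y $ i)"
    by (rule sum.swap)
  also have "\<dots> = (\<Sum>j\<in>UNIV. cnj (x $ j) * (\<Sum>i\<in>UNIV. M $ j $ i * y $ i))"
    by (simp add: sum_distrib_left mult_ac)
  also have "\<dots> = cinner x (M *v y)"
    by (simp add: cinner_def matrix_vector_mult_def)
  finally show ?thesis .
qed

lemma herm_inner:
  assumes "hermitian M"
  shows "(M *v x) \<bullet> y = x \<bullet> (M *v y)"
  by (simp add: inner_cinner herm_cinner[OF assms])



lemma quad_nonpos_zero:
  fixes a c :: real
  assumes "a \<ge> 0" "\<And>t. 2 * t * a + t^2 * c \<le> 0"
  shows "a = 0"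
proof (rule ccontr)
  assume "a \<noteq> 0"
  then have a: "a > 0" using assms(1) by simp
  define t where "t = a / (\<bar>c\<bar> + 1)"
  have t: "t > 0" using a by (simp add: t_def)
  have "2 * t * a + t^2 * c \<le> 0" by (rule assms(2))
  moreover have "2 * t * a + t^2 * c = t * (2 * a + t * c)" by (simp add: power2_eq_square algebra_simps)
  ultimately have "t * (2 * a + t * c) \<le> 0" by simp
  then have "2 * a + t * c \<le> 0" using t by (simp add: mult_le_0_iff)
  moreover have "t * \<bar>c\<bar> < a"
  proof -
    have "t * \<bar>c\<bar> = a * (\<bar>c\<bar> / (\<bar>c\<bar> + 1))" by (simp add: t_def)
    also have "\<dots> < a * 1" using a by (intro mult_strict_left_mono) auto
    finally show ?thesis by simp
  qed
  moreover have "- (t * \<bar>c\<bar>) \<le> t * c"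
  proof -
    have "- \<bar>c\<bar> \<le> c" by linarith
    from mult_left_mono[OF this, of t] t show ?thesis by simp
  qed
  ultimately show False using a by linarith
qed

lemma rayleigh:
  fixes f :: "'a::euclidean_space \<Rightarrow> 'a"
  assumes lf: "linear f" and sa: "\<And>x y. f x \<bullet> y = x \<bullet> f y"
    and S: "subspace S" "S \<noteq> {0}" "\<And>x. x \<in> S \<Longrightarrow> f x \<in> S"
  shows "\<exists>x\<in>S. x \<noteq> 0 \<and> f x = (x \<bullet> f x) *\<^sub>R x"
proof -
  define K where "K = S \<inter> sphere 0 1"
  have "compact K" unfolding K_def
    by (simp add: S(1) closed_Int_compact closed_subspace)
  have "\<exists>y\<in>S. y \<noteq> 0"
  proof (rule ccontr)
    assume "\<not> (\<exists>y\<in>S. y \<noteq> 0)"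
    then have "S \<subseteq> {0}" by auto
    moreover have "0 \<in> S" using S(1) by (rule subspace_0)
    ultimately show False using S(2) by auto
  qed
  then obtain y where y: "y \<in> S" "y \<noteq> 0" by blast
  have "(1 / norm y) *\<^sub>R y \<in> K" using y S(1) by (simp add: K_def subspace_scale)
  then have "K \<noteq> {}" by blast
  have bl: "bounded_linear f" using lf linear_conv_bounded_linear by blast
  have "continuous_on K (\<lambda>x. x \<bullet> f x)"
    by (intro continuous_intros bounded_linear.continuous_on[OF bl])
  then obtain x where x: "x \<in> K" and xmax: "\<And>z. z \<in> K \<Longrightarrow> z \<bullet> f z \<le> x \<bullet> f x"
    using continuous_attains_sup[OF \<open>compact K\<close> \<open>K \<noteq> {}\<close>] by blast
  define l where "l = x \<bullet> f x"
  have xS: "x \<in> S" and xn: "norm x = 1" using x by (auto simp: K_def)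
  have xx: "x \<bullet> x = 1" using xn by (simp add: dot_square_norm)
  have ray: "z \<bullet> f z \<le> l * (z \<bullet> z)" if "z \<in> S" for z
  proof (cases "z = 0")
    case True then show ?thesis using linear_0[OF lf] by simp
  next
    case False
    define n where "n = norm z"
    have n: "n > 0" using False by (simp add: n_def)
    have "(1/n) *\<^sub>R z \<in> K" using that S(1) False by (simp add: K_def n_def subspace_scale)
    then have "((1/n) *\<^sub>R z) \<bullet> f ((1/n) *\<^sub>R z) \<le> l" using xmax l_def by blast
    then have "(1/n)^2 * (z \<bullet> f z) \<le> l"
      by (simp add: linear_scale[OF lf] power2_eq_square)
    then have "n^2 * ((1/n)^2 * (z \<bullet> f z)) \<le> n^2 * l" by (simp add: mult_left_mono)
    moreover have "n^2 * ((1/n)^2 * (z \<bullet> f z)) = z \<bullet> f z" using n by (simp add: field_simps)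
    ultimately have "z \<bullet> f z \<le> n^2 * l" by linarith
    then have "z \<bullet> f z \<le> l * n^2" by (simp only: mult.commute)
    then show ?thesis by (simp add: n_def dot_square_norm)
  qed
  define y where "y = f x - l *\<^sub>R x"
  have yS: "y \<in> S" unfolding y_def using S xS by (simp add: subspace_diff subspace_scale)
  have "y \<bullet> x = f x \<bullet> x - l * (x \<bullet> x)" by (simp add: y_def inner_diff_left)
  then have yx: "y \<bullet> x = 0" by (simp add: xx l_def inner_commute[of "f x" x])
  have yfx: "y \<bullet> f x = y \<bullet> y"
  proof -
    have "f x = y + l *\<^sub>R x" by (simp add: y_def)
    then show ?thesis by (simp add: inner_add_right yx)
  qed
  have "2 * t * (y \<bullet> y) + t^2 * (y \<bullet> f y - l * (y \<bullet> y)) \<le> 0" for t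
  proof -
    have zS: "x + t *\<^sub>R y \<in> S" using S(1) xS yS by (simp add: subspace_add subspace_scale)
    have fz: "f (x + t *\<^sub>R y) = f x + t *\<^sub>R f y" by (simp add: linear_add[OF lf] linear_scale[OF lf])
    have xfy: "x \<bullet> f y = y \<bullet> y" using sa[of x y] yfx by (simp add: inner_commute)
    have "(x + t *\<^sub>R y) \<bullet> (f x + t *\<^sub>R f y) = x \<bullet> f x + t * (x \<bullet> f y) + t * (y \<bullet> f x) + t * t * (y \<bullet> f y)"
      by (simp add: inner_add_left inner_add_right ring_distribs)
    then have e1: "(x + t *\<^sub>R y) \<bullet> f (x + t *\<^sub>R y) = l + 2 * t * (y \<bullet> y) + t^2 * (y \<bullet> f y)"
      by (simp add: fz xfy yfx l_def power2_eq_square)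
    have "(x + t *\<^sub>R y) \<bullet> (x + t *\<^sub>R y) = x \<bullet> x + t * (x \<bullet> y) + t * (y \<bullet> x) + t * t * (y \<bullet> y)"
      by (simp add: inner_add_left inner_add_right ring_distribs)
    then have e2: "(x + t *\<^sub>R y) \<bullet> (x + t *\<^sub>R y) = 1 + t^2 * (y \<bullet> y)"
      using yx by (simp add: xx inner_commute[of x y] power2_eq_square)
    have r: "l + 2 * t * (y \<bullet> y) + t^2 * (y \<bullet> f y) \<le> l * (1 + t^2 * (y \<bullet> y))"
      using ray[OF zS] e1 e2 by simp
    show ?thesis using r by (simp add: algebra_simps)
  qed
  then have "y \<bullet> y = 0" by (intro quad_nonpos_zero) auto
  then have "y = 0" by simp
  then show ?thesis using xS xn l_def by (intro bexI[of _ x]) (auto simp: y_def)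
qed



lemma mv_zero_right: "(M::complex^'m^'m) *v 0 = 0"
  by (simp add: vec_eq_iff matrix_vector_mult_def)

lemma smult_scaleR_comm: "(c::complex) *s (r *\<^sub>R x) = r *\<^sub>R (c *s (x::complex^'m))"
  by (simp only: vec_eq_iff vec_scaleR_comp vector_smult_component) (simp add: mult_ac)

lemma mv_zero_left: "(0::complex^'m^'m) *v x = 0"
  by (simp add: vec_eq_iff matrix_vector_mult_def)

lemma mv_sum_left: "(sum f S) *v (x::complex^'m) = (\<Sum>s\<in>S. (f s :: complex^'m^'m) *v x)"
  by (induction S rule: infinite_finite_induct)
     (simp_all add: matrix_vector_mult_add_rdistrib mv_zero_left)

lemma mv_scaleR_left: "(r *\<^sub>R (M::complex^'m^'m)) *v x = r *\<^sub>R (M *v x)"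
proof -
  have "(r *\<^sub>R M) $ i $ j = of_real r * M $ i $ j" for i j
    by (simp only: vector_scaleR_component) (simp add: scaleR_conv_of_real)
  then show ?thesis
    by (simp only: vec_eq_iff matrix_vector_mult_def vec_lambda_beta vec_scaleR_comp)
       (simp add: sum_distrib_left mult.assoc)
qed

lemma subspace_csmult:
  assumes "subspace S" "\<And>x. x \<in> S \<Longrightarrow> \<i> *s x \<in> S" "x \<in> S"
  shows "(c::complex) *s (x::complex^'m) \<in> S"
  unfolding csmult_decomp[of c x]
  using assms by (intro subspace_add subspace_scale) auto

lemma cinner_diff_right: "cinner x (y - z) = cinner x y - cinner x z"
  by (simp add: cinner_def right_diff_distrib sum_subtractf)

lemma joint_sub:
  fixes G :: "(complex^'m^'m) set"
  assumes "finite K" "K \<subseteq> G" and hG: "\<And>M. M \<in> G \<Longrightarrow> hermitian M"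
    and cG: "\<And>M N. M \<in> G \<Longrightarrow> N \<in> G \<Longrightarrow> M ** N = N ** M"
    and S: "subspace S" "S \<noteq> {0}" "\<And>M x. M \<in> G \<Longrightarrow> x \<in> S \<Longrightarrow> M *v x \<in> S"
      "\<And>x. x \<in> S \<Longrightarrow> \<i> *s x \<in> S"
  shows "\<exists>T. subspace T \<and> T \<subseteq> S \<and> T \<noteq> {0} \<and> (\<forall>M\<in>G. \<forall>x\<in>T. M *v x \<in> T)
     \<and> (\<forall>x\<in>T. \<i> *s x \<in> T) \<and> (\<forall>M\<in>K. \<exists>l::real. \<forall>x\<in>T. M *v x = l *\<^sub>R x)"
  using assms(1,2)
proof (induction K rule: finite_induct)
  case empty
  show ?case using S by (intro exI[of _ S]) auto
next
  case (insert M K)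
  then obtain T where T: "subspace T" "T \<subseteq> S" "T \<noteq> {0}" "\<forall>N\<in>G. \<forall>x\<in>T. N *v x \<in> T"
    "\<forall>x\<in>T. \<i> *s x \<in> T" "\<forall>N\<in>K. \<exists>l::real. \<forall>x\<in>T. N *v x = l *\<^sub>R x"
    by auto
  have MG: "M \<in> G" using insert.prems by simp
  have "\<exists>x\<in>T. x \<noteq> 0 \<and> M *v x = (x \<bullet> (M *v x)) *\<^sub>R x"
    by (rule rayleigh[of "\<lambda>x. M *v x" T]) (use mv_linear herm_inner[OF hG[OF MG]] T MG in auto)
  then obtain x where x: "x \<in> T" "x \<noteq> 0" "M *v x = (x \<bullet> (M *v x)) *\<^sub>R x" by blast
  define l where "l = x \<bullet> (M *v x)"
  define T' where "T' = {y \<in> T. M *v y = l *\<^sub>R y}"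
  have "subspace T'"
    unfolding subspace_def T'_def using T(1)
    by (auto simp: subspace_def matrix_vector_right_distrib mv_scaleR scaleR_add_right mv_zero_right)
  moreover have "T' \<subseteq> S" using T(2) by (auto simp: T'_def)
  moreover have "x \<in> T'" using x by (simp add: T'_def l_def)
  then have "T' \<noteq> {0}" using x(2) by auto
  moreover have "\<forall>N\<in>G. \<forall>y\<in>T'. N *v y \<in> T'"
  proof (intro ballI)
    fix N y assume N: "N \<in> G" and y: "y \<in> T'"
    have "M *v (N *v y) = N *v (M *v y)"
      by (simp add: matrix_vector_mul_assoc cG[OF MG N])
    also have "\<dots> = l *\<^sub>R (N *v y)" using y by (simp add: T'_def mv_scaleR)
    finally show "N *v y \<in> T'" using T(4) N y by (simp add: T'_def)
  qed
  moreover have "\<forall>y\<in>T'. \<i> *s y \<in> T'"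
  proof
    fix y assume y: "y \<in> T'"
    have "M *v (\<i> *s y) = l *\<^sub>R (\<i> *s y)"
      using y by (simp add: T'_def mv_scale smult_scaleR_comm)
    then show "\<i> *s y \<in> T'" using T(5) y by (simp add: T'_def)
  qed
  moreover have "\<forall>N\<in>insert M K. \<exists>l::real. \<forall>y\<in>T'. N *v y = l *\<^sub>R y"
  proof
    fix N assume "N \<in> insert M K"
    then show "\<exists>l::real. \<forall>y\<in>T'. N *v y = l *\<^sub>R y"
    proof
      assume "N = M" then show ?thesis by (auto simp: T'_def)
    next
      assume "N \<in> K"
      with T(6) obtain l' where "\<forall>y\<in>T. N *v y = l' *\<^sub>R y" by blast
      then show ?thesis by (auto simp: T'_def)
    qed
  qed
  ultimately show ?case by blast
qed



lemma onb_sub: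
  fixes \<iota> :: "real^'n \<Rightarrow> complex^'m^'m"
  assumes lin: "linear \<iota>" and herm: "\<And>v. hermitian (\<iota> v)" and ab: "abelian_theory \<iota>"
  shows "subspace S \<Longrightarrow> (\<And>v x. x \<in> S \<Longrightarrow> \<iota> v *v x \<in> S) \<Longrightarrow> (\<And>x. x \<in> S \<Longrightarrow> \<i> *s x \<in> S) \<Longrightarrow>
     \<exists>B a. finite B \<and> B \<subseteq> S \<and> (\<forall>b\<in>B. cinner b b = 1) \<and> (\<forall>b\<in>B. \<forall>b'\<in>B. b \<noteq> b' \<longrightarrow> cinner b b' = 0)
        \<and> (\<forall>b\<in>B. \<forall>v. \<iota> v *v b = (a b \<bullet> v) *\<^sub>R b) \<and> (\<forall>x\<in>S. x = (\<Sum>b\<in>B. cinner b x *s b))"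
proof (induction "dim S" arbitrary: S rule: less_induct)
  case less
  show ?case
  proof (cases "S = {0}")
    case True
    then show ?thesis by (intro exI[of _ "{}"]) auto
  next
    case False
    have "\<exists>T. subspace T \<and> T \<subseteq> S \<and> T \<noteq> {0} \<and> (\<forall>M\<in>range \<iota>. \<forall>x\<in>T. M *v x \<in> T)
     \<and> (\<forall>x\<in>T. \<i> *s x \<in> T) \<and> (\<forall>M\<in>\<iota> ` Basis. \<exists>l::real. \<forall>x\<in>T. M *v x = l *\<^sub>R x)"
      by (rule joint_sub[of "\<iota> ` Basis" "range \<iota>" S])
         (use less.prems False herm ab in \<open>auto simp: abelian_theory_def\<close>)
    then obtain T where T: "subspace T" "T \<subseteq> S" "T \<noteq> {0}"
      "\<forall>M\<in>\<iota> ` Basis. \<exists>l::real. \<forall>x\<in>T. M *v x = l *\<^sub>R x" by blast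
    have "\<exists>x0\<in>T. x0 \<noteq> 0"
    proof (rule ccontr)
      assume "\<not> (\<exists>x0\<in>T. x0 \<noteq> 0)"
      then have "T \<subseteq> {0}" by auto
      moreover have "0 \<in> T" using T(1) by (rule subspace_0)
      ultimately show False using T(3) by auto
    qed
    then obtain x0 where x0: "x0 \<in> T" "x0 \<noteq> 0" by blast
    define u where "u = (1 / norm x0) *\<^sub>R x0"
    have uT: "u \<in> T" using T(1) x0 by (simp add: u_def subspace_scale)
    have uS: "u \<in> S" using uT T(2) by blast
    have "norm u = 1" using x0 by (simp add: u_def)
    then have "u \<bullet> u = 1" by (simp add: dot_square_norm)
    then have uu: "cinner u u = 1" by (simp add: cinner_self)
    have "\<forall>b\<in>Basis. \<exists>l::real. \<forall>x\<in>T. \<iota> b *v x = l *\<^sub>R x" using T(4) by blast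
    then obtain lam where lam: "\<And>b x. b \<in> Basis \<Longrightarrow> x \<in> T \<Longrightarrow> \<iota> b *v x = lam b *\<^sub>R x"
      by metis
    define \<alpha> where "\<alpha> = (\<Sum>b\<in>Basis. lam b *\<^sub>R b)"
    have ueig: "\<iota> v *v u = (\<alpha> \<bullet> v) *\<^sub>R u" for v
    proof -
      have "\<iota> v = \<iota> (\<Sum>b\<in>Basis. (v \<bullet> b) *\<^sub>R b)" by (simp add: euclidean_representation)
      also have "\<dots> = (\<Sum>b\<in>Basis. (v \<bullet> b) *\<^sub>R \<iota> b)"
        by (simp add: linear_sum[OF lin] linear_scale[OF lin])
      finally have "\<iota> v *v u = (\<Sum>b\<in>Basis. (v \<bullet> b) *\<^sub>R (\<iota> b *v u))"
        by (simp add: mv_sum_left mv_scaleR_left)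
      also have "\<dots> = (\<Sum>b\<in>Basis. ((v \<bullet> b) * lam b) *\<^sub>R u)"
        using lam uT by (intro sum.cong) auto
      also have "\<dots> = (\<Sum>b\<in>Basis. (v \<bullet> b) * lam b) *\<^sub>R u"
        by (simp add: scaleR_sum_left)
      also have "(\<Sum>b\<in>Basis. (v \<bullet> b) * lam b) = \<alpha> \<bullet> v"
      proof -
        have "\<alpha> \<bullet> v = (\<Sum>b\<in>Basis. lam b * (b \<bullet> v))" by (simp add: \<alpha>_def inner_sum_left)
        moreover have "(\<Sum>b\<in>Basis. (v \<bullet> b) * lam b) = (\<Sum>b\<in>Basis. lam b * (b \<bullet> v))"
          by (intro sum.cong) (simp_all add: inner_commute)
        ultimately show ?thesis by simp
      qed
      finally show ?thesis .
    qed
    define S' where "S' = {y \<in> S. cinner u y = 0}"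
    have sub': "subspace S'"
      using less.prems(1) unfolding S'_def subspace_def
      by (auto simp: cinner_add_right cinner_scaleR_right)
    have inv': "\<iota> v *v y \<in> S'" if "y \<in> S'" for v y
    proof -
      have "cinner u (\<iota> v *v y) = cinner (\<iota> v *v u) y" by (simp add: herm_cinner[OF herm])
      also have "\<dots> = 0" using that by (simp add: ueig cinner_scaleR_left S'_def)
      finally show ?thesis using that less.prems(2) by (simp add: S'_def)
    qed
    have J': "\<i> *s y \<in> S'" if "y \<in> S'" for y
      using that less.prems(3) by (simp add: S'_def cinner_scale_right)
    have "u \<notin> S'" using uu by (simp add: S'_def)
    then have "S' \<subset> S" using uS by (auto simp: S'_def)
    moreover have e1: "span S' = S'" using sub' span_eq_iff by blast
    moreover have e2: "span S = S" using less.prems(1) span_eq_iff by blast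
    ultimately have "span S' \<subset> span S" by (simp only: e1 e2)
    then have "dim S' < dim S" by (rule dim_psubset)
    then obtain B' a' where B': "finite B'" "B' \<subseteq> S'" "\<forall>b\<in>B'. cinner b b = 1"
      "\<forall>b\<in>B'. \<forall>b'\<in>B'. b \<noteq> b' \<longrightarrow> cinner b b' = 0"
      "\<forall>b\<in>B'. \<forall>v. \<iota> v *v b = (a' b \<bullet> v) *\<^sub>R b" "\<forall>x\<in>S'. x = (\<Sum>b\<in>B'. cinner b x *s b)"
      using less.hyps[of S'] sub' inv' J' by blast
    have uB': "u \<notin> B'" using B'(2) uu by (auto simp: S'_def)
    have ub: "cinner u b = 0" if "b \<in> B'" for b using that B'(2) by (auto simp: S'_def)
    have bu: "cinner b u = 0" if "b \<in> B'" for b using ub[OF that] cinner_cnj[of u b] by simp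
    define B where "B = insert u B'"
    define a where "a = a'(u := \<alpha>)"
    have "finite B" using B'(1) by (simp add: B_def)
    moreover have "B \<subseteq> S" using B'(2) uS by (auto simp: B_def S'_def)
    moreover have "\<forall>b\<in>B. cinner b b = 1" using B'(3) uu by (simp add: B_def)
    moreover have "\<forall>b\<in>B. \<forall>b'\<in>B. b \<noteq> b' \<longrightarrow> cinner b b' = 0"
      using B'(4) ub bu by (auto simp: B_def)
    moreover have "\<forall>b\<in>B. \<forall>v. \<iota> v *v b = (a b \<bullet> v) *\<^sub>R b"
      using B'(5) ueig uB' by (auto simp: B_def a_def)
    moreover have "\<forall>x\<in>S. x = (\<Sum>b\<in>B. cinner b x *s b)"
    proof
      fix y assume y: "y \<in> S"
      define y' where "y' = y - cinner u y *s u"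
      have "cinner u y *s u \<in> S"
        using less.prems(1,3) uS by (rule subspace_csmult)
      then have y'S: "y' \<in> S" using y less.prems(1) by (simp add: y'_def subspace_diff)
      have "cinner u y' = 0" by (simp add: y'_def cinner_diff_right cinner_scale_right uu)
      then have "y' \<in> S'" using y'S by (simp add: S'_def)
      then have e: "y' = (\<Sum>b\<in>B'. cinner b y' *s b)" using B'(6) by blast
      have "cinner b y' = cinner b y" if "b \<in> B'" for b
        using bu[OF that] by (simp add: y'_def cinner_diff_right cinner_scale_right)
      then have "y' = (\<Sum>b\<in>B'. cinner b y *s b)" using e by (metis (no_types, lifting) sum.cong)
      then have "y = cinner u y *s u + (\<Sum>b\<in>B'. cinner b y *s b)" by (simp add: y'_def algebra_simps)
      then show "y = (\<Sum>b\<in>B. cinner b y *s b)" using B'(1) uB' by (simp add: B_def)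
    qed
    ultimately show ?thesis by blast
  qed
qed



lemma cinner_axis: "cinner b (axis j 1) = cnj (b $ j)"
  by (simp add: cinner_def axis_def if_distrib cong: if_cong)

lemma mv_sum_right: "(M::complex^'m^'m) *v (sum f S) = (\<Sum>s\<in>S. M *v f s)"
  by (induction S rule: infinite_finite_induct)
     (simp_all add: matrix_vector_right_distrib mv_zero_right)

lemma pure_mv: "(\<chi> i j. \<psi> $ i * cnj (\<psi> $ j)) *v x = cinner \<psi> x *s \<psi>"
  by (simp add: vec_eq_iff matrix_vector_mult_def cinner_def sum_distrib_left sum_distrib_right mult_ac)

lemma onb_comp:
  assumes expn: "\<forall>x. x = (\<Sum>b\<in>B. cinner b x *s b)"
  shows "(\<Sum>b\<in>B. cnj (b $ j) * b $ i) = (if i = j then 1 else 0)"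
proof -
  have "axis j (1::complex) = (\<Sum>b\<in>B. cinner b (axis j 1) *s b)" using expn by blast
  then have "axis j (1::complex) $ i = (\<Sum>b\<in>B. cinner b (axis j 1) *s b) $ i" by simp
  then have "axis j (1::complex) $ i = (\<Sum>b\<in>B. cnj (b $ j) * b $ i)"
    by (simp only: sum_component vector_smult_component cinner_axis)
  then show ?thesis by (simp add: axis_def)
qed

lemma onb_trace:
  assumes expn: "\<forall>x. x = (\<Sum>b\<in>B. cinner b x *s b)"
  shows "trace M = (\<Sum>b\<in>B. cinner b (M *v b))"
proof -
  have "(\<Sum>b\<in>B. cinner b (M *v b)) = (\<Sum>b\<in>B. \<Sum>i\<in>UNIV. \<Sum>j\<in>UNIV. M $ i $ j * (cnj (b $ i) * b $ j))"
    by (simp add: cinner_def matrix_vector_mult_def sum_distrib_left mult_ac)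
  also have "\<dots> = (\<Sum>i\<in>UNIV. \<Sum>b\<in>B. \<Sum>j\<in>UNIV. M $ i $ j * (cnj (b $ i) * b $ j))"
    by (rule sum.swap)
  also have "\<dots> = (\<Sum>i\<in>UNIV. \<Sum>j\<in>UNIV. \<Sum>b\<in>B. M $ i $ j * (cnj (b $ i) * b $ j))"
    by (intro sum.cong refl sum.swap)
  also have "\<dots> = (\<Sum>i\<in>UNIV. \<Sum>j\<in>UNIV. M $ i $ j * (if j = i then 1 else 0))"
    by (simp add: sum_distrib_left[symmetric] onb_comp[OF expn])
  also have "\<dots> = trace M"
    by (simp add: trace_def if_distrib cong: if_cong)
  finally show ?thesis by simp
qed

lemma onb_coeff:
  assumes fin: "finite B" and nrm: "\<forall>b\<in>B. cinner b b = 1"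
    and orth: "\<forall>b\<in>B. \<forall>b'\<in>B. b \<noteq> b' \<longrightarrow> cinner b b' = 0" and b: "b \<in> B"
  shows "cinner b (\<Sum>b'\<in>B. c b' *s b') = c b"
proof -
  have "cinner b (\<Sum>b'\<in>B. c b' *s b') = (\<Sum>b'\<in>B. c b' * cinner b b')"
    by (simp add: cinner_sum_right cinner_scale_right)
  also have "\<dots> = (\<Sum>b'\<in>B. if b' = b then c b' else 0)"
    using nrm orth b by (intro sum.cong) auto
  also have "\<dots> = c b" using fin b by simp
  finally show ?thesis .
qed

lemma istar_formula:
  assumes expn: "\<forall>x. x = (\<Sum>b\<in>B. cinner b x *s b)"
    and eig: "\<forall>b\<in>B. \<forall>v. \<iota> v *v b = (a b \<bullet> v) *\<^sub>R b"
  shows "iota_star \<iota> \<rho> = (\<Sum>b\<in>B. Re (cinner b (\<rho> *v b)) *\<^sub>R a b)"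
proof -
  have "Re (trace (\<rho> ** \<iota> (axis k 1))) = (\<Sum>b\<in>B. Re (cinner b (\<rho> *v b)) * a b $ k)" for k
  proof -
    have "trace (\<rho> ** \<iota> (axis k 1)) = (\<Sum>b\<in>B. cinner b ((\<rho> ** \<iota> (axis k 1)) *v b))"
      by (rule onb_trace[OF expn])
    also have "\<dots> = (\<Sum>b\<in>B. of_real (a b $ k) * cinner b (\<rho> *v b))"
    proof (intro sum.cong refl)
      fix b assume "b \<in> B"
      then have "\<iota> (axis k 1) *v b = (a b $ k) *\<^sub>R b" using eig by (simp add: cart_eq_inner_axis)
      then show "cinner b ((\<rho> ** \<iota> (axis k 1)) *v b) = of_real (a b $ k) * cinner b (\<rho> *v b)"
        by (simp add: matrix_vector_mul_assoc[symmetric] mv_scaleR cinner_scaleR_right)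
    qed
    finally show ?thesis by (simp add: mult.commute)
  qed
  then show ?thesis by (simp add: iota_star_def vec_eq_iff)
qed



theorem proposition4p7:
  fixes \<iota> :: "real^'n \<Rightarrow> complex^'m^'m"
    and W :: "complex^'m^'m"
  assumes lin: "linear \<iota>"
    and herm: "\<And>v. hermitian (\<iota> v)"
    and W_herm: "hermitian W"
    and ab: "abelian_theory \<iota>"
  shows "iota_star \<iota> ` pure_states = iota_star \<iota> ` density_ops
    \<and> iota_star \<iota> ` density_ops = convex hull (weights \<iota>)
    \<and> polytope (convex hull (weights \<iota>))
    \<and> aff_dim (convex hull (weights \<iota>))
        = int CARD('n) - int (dim {v. \<exists>c::real. \<iota> v = c *\<^sub>R mat 1})"
proof -
  obtain B a where fin: "finite B" and nrm: "\<forall>b\<in>B. cinner b b = 1"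
    and orth: "\<forall>b\<in>B. \<forall>b'\<in>B. b \<noteq> b' \<longrightarrow> cinner b b' = 0"
    and eig: "\<forall>b\<in>B. \<forall>v. \<iota> v *v b = (a b \<bullet> v) *\<^sub>R b"
    and expn0: "\<forall>x\<in>UNIV. x = (\<Sum>b\<in>B. cinner b x *s b)"
    using onb_sub[OF lin herm ab, of UNIV] by auto
  have expn: "\<forall>x. x = (\<Sum>b\<in>B. cinner b x *s b)" using expn0 by blast
  have bnz: "b \<noteq> 0" if "b \<in> B" for b using nrm that by fastforce
  have istar: "iota_star \<iota> \<rho> = (\<Sum>b\<in>B. Re (cinner b (\<rho> *v b)) *\<^sub>R a b)" for \<rho>
    by (rule istar_formula[OF expn eig])
  have Wt: "weights \<iota> = a ` B"
  proof
    show "a ` B \<subseteq> weights \<iota>"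
      using eig bnz by (auto simp: weights_def of_real_smult)
  next
    show "weights \<iota> \<subseteq> a ` B"
    proof
      fix \<alpha> assume "\<alpha> \<in> weights \<iota>"
      then obtain \<psi> where psi: "\<psi> \<noteq> 0" "\<And>v. \<iota> v *v \<psi> = complex_of_real (\<alpha> \<bullet> v) *s \<psi>"
        by (auto simp: weights_def)
      have "\<exists>b\<in>B. cinner b \<psi> \<noteq> 0"
      proof (rule ccontr)
        assume "\<not> (\<exists>b\<in>B. cinner b \<psi> \<noteq> 0)"
        then have "(\<Sum>b\<in>B. cinner b \<psi> *s b) = 0" by simp
        then show False using expn psi(1) by metis
      qed
      then obtain b where b: "b \<in> B" "cinner b \<psi> \<noteq> 0" by blast
      have "\<alpha> \<bullet> v = a b \<bullet> v" for v
      proof -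
        have "of_real (\<alpha> \<bullet> v) * cinner b \<psi> = cinner b (\<iota> v *v \<psi>)"
          by (simp add: psi(2) cinner_scale_right)
        also have "\<dots> = cinner (\<iota> v *v b) \<psi>" by (simp add: herm_cinner[OF herm])
        also have "\<dots> = of_real (a b \<bullet> v) * cinner b \<psi>"
          using eig b(1) by (simp add: cinner_scaleR_left)
        finally show ?thesis using b(2) by simp
      qed
      then have "(\<alpha> - a b) \<bullet> (\<alpha> - a b) = 0" by (simp add: inner_diff_left)
      then have "\<alpha> = a b" by simp
      then show "\<alpha> \<in> a ` B" using b(1) by blast
    qed
  qed
  have PE: "pure_states \<subseteq> (density_ops :: (complex^'m^'m) set)"
  proof
    fix \<rho> :: "complex^'m^'m" assume "\<rho> \<in> pure_states"
    then obtain \<psi> where psi: "cinner \<psi> \<psi> = 1" and rho: "\<rho> = (\<chi> i j. \<psi> $ i * cnj (\<psi> $ j))"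
      by (auto simp: pure_states_def)
    have "hermitian \<rho>" by (simp add: rho hermitian_def adjoint_mat_def vec_eq_iff mult.commute)
    moreover have "0 \<le> Re (cinner x (\<rho> *v x))" for x
    proof -
      have "cinner x (\<rho> *v x) = cinner \<psi> x * cnj (cinner \<psi> x)"
        by (simp add: rho pure_mv cinner_scale_right cinner_cnj)
      then show ?thesis by (simp add: complex_mult_cnj)
    qed
    moreover have "trace \<rho> = 1"
      using psi by (simp add: rho trace_def cinner_def mult.commute)
    ultimately show "\<rho> \<in> density_ops" by (simp add: density_ops_def)
  qed
  have EC: "iota_star \<iota> ` density_ops \<subseteq> convex hull (a ` B)"
  proof
    fix y assume "y \<in> iota_star \<iota> ` density_ops"
    then obtain \<rho> where rho: "\<rho> \<in> density_ops" and y: "y = iota_star \<iota> \<rho>" by blast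
    have "(\<Sum>b\<in>B. Re (cinner b (\<rho> *v b))) = Re (trace \<rho>)"
      by (simp add: onb_trace[OF expn])
    also have "\<dots> = 1" using rho by (simp add: density_ops_def)
    finally have s1: "(\<Sum>b\<in>B. Re (cinner b (\<rho> *v b))) = 1" .
    show "y \<in> convex hull (a ` B)"
      unfolding y istar
      by (rule convex_sum[OF fin convex_convex_hull s1])
         (use rho in \<open>auto simp: density_ops_def intro: hull_inc\<close>)
  qed
  have CP: "convex hull (a ` B) \<subseteq> iota_star \<iota> ` pure_states"
  proof
    fix y assume "y \<in> convex hull (a ` B)"
    then obtain u where u0: "\<forall>x\<in>a ` B. 0 \<le> u x" and u1: "sum u (a ` B) = 1"
      and uy: "(\<Sum>x\<in>a ` B. u x *\<^sub>R x) = y"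
      using convex_hull_finite[of "a ` B"] fin by auto
    define cnt where "cnt x = card {b \<in> B. a b = x}" for x
    define q where "q b = u (a b) / cnt (a b)" for b
    have cnt_pos: "cnt x > 0" if "x \<in> a ` B" for x
      using that fin by (auto simp: cnt_def card_gt_0_iff)
    have q0: "q b \<ge> 0" if "b \<in> B" for b using that u0 by (simp add: q_def)
    have qsum: "(\<Sum>b\<in>B. q b *\<^sub>R g (a b)) = (\<Sum>x\<in>a ` B. u x *\<^sub>R g x)" for g :: "real^'n \<Rightarrow> real^'n"
    proof -
      have "(\<Sum>b\<in>B. q b *\<^sub>R g (a b)) = (\<Sum>x\<in>a ` B. \<Sum>b\<in>{b \<in> B. a b = x}. q b *\<^sub>R g (a b))"
        by (rule sum.image_gen[OF fin])
      also have "\<dots> = (\<Sum>x\<in>a ` B. u x *\<^sub>R g x)"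
      proof (intro sum.cong refl)
        fix x assume x: "x \<in> a ` B"
        have "(\<Sum>b\<in>{b \<in> B. a b = x}. q b *\<^sub>R g (a b)) = (\<Sum>b\<in>{b \<in> B. a b = x}. (u x / cnt x) *\<^sub>R g x)"
          by (intro sum.cong refl) (auto simp: q_def)
        also have "\<dots> = real (cnt x) *\<^sub>R ((u x / cnt x) *\<^sub>R g x)"
          by (simp only: sum_constant_scaleR cnt_def)
        also have "\<dots> = (cnt x * (u x / cnt x)) *\<^sub>R g x" by simp
        also have "\<dots> = u x *\<^sub>R g x" using cnt_pos[OF x] by simp
        finally show "(\<Sum>b\<in>{b \<in> B. a b = x}. q b *\<^sub>R g (a b)) = u x *\<^sub>R g x" .
      qed
      finally show ?thesis .
    qed
    have qy: "(\<Sum>b\<in>B. q b *\<^sub>R a b) = y" using qsum[of "\<lambda>x. x"] uy by simp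
    have q1: "(\<Sum>b\<in>B. q b) = 1"
    proof -
      have "(\<Sum>b\<in>B. q b *\<^sub>R (1::real^'n)) = (\<Sum>x\<in>a ` B. u x *\<^sub>R 1)" by (rule qsum)
      then have "(\<Sum>b\<in>B. q b) *\<^sub>R (1::real^'n) = (\<Sum>x\<in>a ` B. u x) *\<^sub>R 1"
        by (simp add: scaleR_sum_left)
      then show ?thesis using u1 by (simp add: vec_eq_iff)
    qed
    define \<psi> where "\<psi> = (\<Sum>b\<in>B. complex_of_real (sqrt (q b)) *s b)"
    have cb: "cinner b \<psi> = of_real (sqrt (q b))" if "b \<in> B" for b
      unfolding \<psi>_def by (rule onb_coeff[OF fin nrm orth that])
    have cb': "cinner \<psi> b = of_real (sqrt (q b))" if "b \<in> B" for b
      using cb[OF that] cinner_cnj[of b \<psi>] by simp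
    have "cinner \<psi> \<psi> = cinner \<psi> (\<Sum>b\<in>B. cinner b \<psi> *s b)" using expn by metis
    also have "\<dots> = (\<Sum>b\<in>B. cinner b \<psi> * cinner \<psi> b)"
      by (simp add: cinner_sum_right cinner_scale_right)
    also have "\<dots> = (\<Sum>b\<in>B. of_real (q b))"
      using q0 by (intro sum.cong refl) (simp add: cb cb' flip: of_real_mult)
    also have "\<dots> = 1" using q1 by (simp flip: of_real_sum)
    finally have psi1: "cinner \<psi> \<psi> = 1" .
    define \<rho> where "\<rho> = (\<chi> i j. \<psi> $ i * cnj (\<psi> $ j))"
    have "\<rho> \<in> pure_states" using psi1 by (auto simp: pure_states_def \<rho>_def)
    moreover have "iota_star \<iota> \<rho> = y"
    proof -
      have "Re (cinner b (\<rho> *v b)) = q b" if "b \<in> B" for b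
        using q0[OF that] by (simp add: \<rho>_def pure_mv cinner_scale_right cb[OF that] cb'[OF that] flip: of_real_mult)
      then have "iota_star \<iota> \<rho> = (\<Sum>b\<in>B. q b *\<^sub>R a b)" by (simp add: istar)
      then show ?thesis using qy by simp
    qed
    ultimately show "y \<in> iota_star \<iota> ` pure_states" by blast
  qed
  have part12: "iota_star \<iota> ` pure_states = iota_star \<iota> ` density_ops
    \<and> iota_star \<iota> ` density_ops = convex hull (weights \<iota>)"
    using PE EC CP unfolding Wt by blast
  have part3: "polytope (convex hull (weights \<iota>))"
    unfolding Wt polytope_def using fin by blast
  have "B \<noteq> {}"
  proof
    assume "B = {}"
    then have "axis (undefined::'m) (1::complex) = 0" using expn by (metis sum.empty)
    then show False by simp
  qed
  then obtain b0 where b0: "b0 \<in> B" by blast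
  define D where "D = (\<lambda>x. x - a b0) ` a ` B"
  have "aff_dim (convex hull (weights \<iota>)) = aff_dim (a ` B)"
    by (simp add: Wt aff_dim_convex_hull)
  also have "\<dots> = int (dim D)"
    unfolding D_def by (rule aff_dim_eq_dim_subtract) (use b0 in \<open>auto intro: hull_inc\<close>)
  finally have ad: "aff_dim (convex hull (weights \<iota>)) = int (dim D)" .
  define L where "L = {v. \<exists>c::real. \<iota> v = c *\<^sub>R mat 1}"
  have L: "L = {y \<in> UNIV. \<forall>x\<in>span D. orthogonal x y}"
  proof (intro set_eqI iffI)
    fix v assume "v \<in> L"
    then obtain c where c: "\<iota> v = c *\<^sub>R mat 1" by (auto simp: L_def)
    have ab: "a b \<bullet> v = c" if "b \<in> B" for b
    proof -
      have "(a b \<bullet> v) *\<^sub>R b = c *\<^sub>R b" using eig that c by (metis mv_scaleR_left matrix_vector_mul_lid)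
      then show ?thesis using bnz[OF that] by simp
    qed
    have "D \<subseteq> {y. orthogonal v y}"
      using ab b0 by (auto simp: D_def orthogonal_def inner_diff_right inner_commute)
    then have "span D \<subseteq> {y. orthogonal v y}"
      by (rule span_minimal) (rule subspace_orthogonal_to_vector)
    then show "v \<in> {y \<in> UNIV. \<forall>x\<in>span D. orthogonal x y}"
      by (auto simp: orthogonal_commute)
  next
    fix v assume "v \<in> {y \<in> UNIV. \<forall>x\<in>span D. orthogonal x y}"
    then have o: "\<forall>x\<in>D. orthogonal x v" using span_superset by blast
    define c where "c = a b0 \<bullet> v"
    have ab: "a b \<bullet> v = c" if "b \<in> B" for b
      using o that by (auto simp: D_def orthogonal_def c_def inner_diff_left)
    have "\<iota> v = c *\<^sub>R mat 1"
      unfolding matrix_eq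
    proof
      fix x
      have "\<iota> v *v x = \<iota> v *v (\<Sum>b\<in>B. cinner b x *s b)" using expn by metis
      also have "\<dots> = (\<Sum>b\<in>B. cinner b x *s (c *\<^sub>R b))"
        using eig ab by (simp add: mv_sum_right mv_scale)
      also have "\<dots> = c *\<^sub>R (\<Sum>b\<in>B. cinner b x *s b)"
        by (simp add: smult_scaleR_comm scaleR_sum_right)
      also have "\<dots> = (c *\<^sub>R mat 1) *v x" using expn by (metis mv_scaleR_left matrix_vector_mul_lid)
      finally show "\<iota> v *v x = (c *\<^sub>R mat 1) *v x" .
    qed
    then show "v \<in> L" by (auto simp: L_def)
  qed
  have "dim {y \<in> UNIV. \<forall>x\<in>span D. orthogonal x y} + dim (span D) = dim (UNIV :: (real^'n) set)"
    by (rule dim_subspace_orthogonal_to_vectors) (auto simp: subspace_span)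
  then have "dim L + dim D = CARD('n)" by (simp add: L dim_span)
  then have part4: "aff_dim (convex hull (weights \<iota>)) = int CARD('n) - int (dim L)"
    using ad by simp
  show ?thesis using part12 part3 part4 by (simp add: L_def)
qed

end
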